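(* There exist positive numbers $w$ and $a$ such that $\gamma_2(B_2^2(0,w))=\gamma_1((-a,a))$ and $\gamma_2^+(B_2^2(0,w))>\gamma_1^+((-a,a))$.
   Context: $\gamma_n$ denotes the standard Gaussian probability measure on $\mathbb{R}^n$. $B_2^k(0,r)=\{x\in\mathbb{R}^k:|x|\le r\}$. For $A\subseteq\mathbb{R}^n$, $A_t=\{x: d(x,A)<t\}$ and the Gaussian boundary measure is $\gamma_n^+(A)=\liminf_{t\to0}\frac{\gamma_n(A_t)-\gamma_n(A)}{t}$. *)

theory Defs
  imports "HOL-Analysis.Analysis"
begin

definition gauss :: "'a::euclidean_space measure" where
  "gauss = density lborel
     (\<lambda>x. ennreal ((2 * pi) powr (- real DIM('a) / 2) * exp (- (norm x)\<^sup>2 / 2)))"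

definition gauss_measure :: "'a::euclidean_space set \<Rightarrow> real" where
  "gauss_measure A = measure gauss A"

definition nbhd :: "'a::euclidean_space set \<Rightarrow> real \<Rightarrow> 'a set" where
  "nbhd A t = {x. infdist x A < t}"

definition gauss_boundary :: "'a::euclidean_space set \<Rightarrow> ereal" where
  "gauss_boundary A =
     Liminf (at_right 0) (\<lambda>t. ereal ((gauss_measure (nbhd A t) - gauss_measure A) / t))"

end

theory Submission
  imports Defs "HOL-Probability.Probability" "HOL-Real_Asymp.Real_Asymp"
begin

lemma exp_tail_int:
  assumes "0 \<le> b"
  shows "(\<integral>\<^sup>+s. ennreal (s * exp (- (s^2 / 2))) * indicator {b..} s \<partial>lborel) = ennreal (exp (- (b^2 / 2)))"
proof -
  have "(\<integral>\<^sup>+s. ennreal (s * exp (- (s^2 / 2))) * indicator {b..} s \<partial>lborel) = 0 - (- exp (- (b^2 / 2)))"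
    by (rule nn_integral_FTC_atLeast[where F="\<lambda>s. - exp (- (s^2 / 2))"])
       (insert assms, (auto intro!: derivative_eq_intros simp: field_simps), real_asymp)
  then show ?thesis by simp
qed

lemma ball_int:
  fixes S :: "(real^2) set" and R :: real
  assumes S[measurable]: "S \<in> sets lborel" and R: "0 \<le> R"
    and vol: "\<And>s. 0 \<le> s \<Longrightarrow> emeasure lborel (S \<inter> cball 0 s) = ennreal (pi * (min R s)^2)"
  shows "(\<integral>\<^sup>+x. ennreal (exp (-((norm x)^2)/2)) * indicator S x \<partial>lborel) = ennreal (2*pi*(1 - exp (-(R^2)/2)))"
proof -
  define g where "g s = s * exp (- (s^2 / 2))" for s :: real
  have PS: "pair_sigma_finite (lborel :: real measure) (lborel :: (real^2) measure)"
    by (simp add: pair_sigma_finite_def lborel.sigma_finite_measure_axioms)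
  have "(\<integral>\<^sup>+x. ennreal (exp (-((norm x)^2)/2)) * indicator S x \<partial>lborel)
      = (\<integral>\<^sup>+x. (\<integral>\<^sup>+s. ennreal (g s) * indicator {norm x..} s \<partial>lborel) * indicator S x \<partial>lborel)"
    by (simp add: g_def exp_tail_int)
  also have "\<dots> = (\<integral>\<^sup>+x. (\<integral>\<^sup>+s. ennreal (g s) * indicator {norm x..} s * indicator S x \<partial>lborel) \<partial>lborel)"
    by (intro nn_integral_cong, subst nn_integral_multc) (auto simp: g_def)
  also have "\<dots> = (\<integral>\<^sup>+s. (\<integral>\<^sup>+x. ennreal (g s) * indicator {norm x..} s * indicator S x \<partial>lborel) \<partial>lborel)"
    by (rule pair_sigma_finite.Fubini'[OF PS, of "\<lambda>s x. ennreal (g s) * indicator {norm x..} s * indicator S x"])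
       (unfold indicator_def g_def, simp add: case_prod_beta, measurable)
  also have "\<dots> = (\<integral>\<^sup>+s. ennreal (g s) * emeasure lborel (S \<inter> cball 0 s) \<partial>lborel)"
  proof (intro nn_integral_cong)
    fix s :: real
    have "(\<integral>\<^sup>+x. ennreal (g s) * indicator {norm x..} s * indicator S x \<partial>lborel)
       = (\<integral>\<^sup>+x. ennreal (g s) * indicator (S \<inter> cball 0 s) x \<partial>lborel)"
      by (intro nn_integral_cong) (auto simp: indicator_def)
    also have "\<dots> = ennreal (g s) * emeasure lborel (S \<inter> cball 0 s)"
      using S by (intro nn_integral_cmult_indicator) auto
    finally show "(\<integral>\<^sup>+x. ennreal (g s) * indicator {norm x..} s * indicator S x \<partial>lborel) = ennreal (g s) * emeasure lborel (S \<inter> cball 0 s)" .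
  qed
  also have "\<dots> = (\<integral>\<^sup>+s. ennreal (pi * s^3 * exp (-(s^2)/2)) * indicator {0..R} s
                      + ennreal (pi * R^2 * g s) * indicator {R..} s \<partial>lborel)"
  proof (intro nn_integral_cong_AE)
    show "AE s in lborel. ennreal (g s) * emeasure lborel (S \<inter> cball 0 s) =
       ennreal (pi * s^3 * exp (-(s^2)/2)) * indicator {0..R} s + ennreal (pi * R^2 * g s) * indicator {R..} s"
      using AE_lborel_singleton[of R]
    proof eventually_elim
      case (elim s)
      show ?case
      proof (cases "s < 0")
        case True
        then have "g s \<le> 0" by (simp add: g_def mult_nonpos_nonneg)
        then show ?thesis using True R by (auto simp: indicator_def ennreal_neg)
      next
        case False
        then have s: "0 \<le> s" by simp
        show ?thesis
        proof (cases "s < R")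
          case True
          then show ?thesis using s vol[OF s]
            by (auto simp: indicator_def g_def ennreal_mult'[symmetric] power3_eq_cube power2_eq_square mult_ac)
        next
          case False
          then show ?thesis using s vol[OF s] elim R
            by (auto simp: indicator_def g_def ennreal_mult'[symmetric] mult_ac)
        qed
      qed
    qed
  qed
  also have "\<dots> = (\<integral>\<^sup>+s. ennreal (pi * s^3 * exp (-(s^2)/2)) * indicator {0..R} s \<partial>lborel)
                 + (\<integral>\<^sup>+s. ennreal (pi * R^2 * g s) * indicator {R..} s \<partial>lborel)"
    by (rule nn_integral_add) (auto simp: g_def)
  also have "(\<integral>\<^sup>+s. ennreal (pi * s^3 * exp (-(s^2)/2)) * indicator {0..R} s \<partial>lborel)
      = ennreal (pi * (2 - (R^2 + 2) * exp (-(R^2)/2)))"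
  proof -
    have "((\<lambda>s. pi * s^3 * exp (-(s^2)/2)) has_integral
        ((\<lambda>s. - pi * (s^2 + 2) * exp (-(s^2)/2)) R - (\<lambda>s. - pi * (s^2 + 2) * exp (-(s^2)/2)) 0)) {0..R}"
      by (intro fundamental_theorem_of_calculus R)
         (auto intro!: derivative_eq_intros simp: has_real_derivative_iff_has_vector_derivative[symmetric] field_simps power3_eq_cube power2_eq_square)
    then have "((\<lambda>s. pi * s^3 * exp (-(s^2)/2)) has_integral pi * (2 - (R^2 + 2) * exp (-(R^2)/2))) {0..R}"
      by (simp add: algebra_simps)
    from nn_integral_has_integral_lebesgue'[OF _ this] show ?thesis by simp
  qed
  also have "(\<integral>\<^sup>+s. ennreal (pi * R^2 * g s) * indicator {R..} s \<partial>lborel)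
      = ennreal (pi * R^2) * (\<integral>\<^sup>+s. ennreal (g s) * indicator {R..} s \<partial>lborel)"
    by (subst nn_integral_cmult[symmetric])
       (auto simp: ennreal_mult' ennreal_mult'' mult_ac g_def intro!: nn_integral_cong)
  also have "\<dots> = ennreal (pi * R^2 * exp (-(R^2)/2))"
    using R by (simp add: g_def exp_tail_int ennreal_mult'[symmetric])
  finally have eq: "(\<integral>\<^sup>+x. ennreal (exp (-((norm x)^2)/2)) * indicator S x \<partial>lborel)
     = ennreal (pi * (2 - (R^2 + 2) * exp (-(R^2)/2))) + ennreal (pi * R^2 * exp (-(R^2)/2))" .
  have "1 + R^2/2 \<le> exp (R^2/2)" by (rule exp_ge_add_one_self)
  then have "(R^2 + 2) * exp (-(R^2)/2) \<le> 2"
    by (simp add: exp_minus field_simps)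
  then have A: "0 \<le> pi * (2 - (R^2 + 2) * exp (-(R^2)/2))" by simp
  have B: "0 \<le> pi * R^2 * exp (-(R^2)/2)" by simp
  show ?thesis unfolding eq ennreal_plus[OF A B, symmetric]
    by (simp add: algebra_simps)
qed

definition phi :: "real \<Rightarrow> real" where
  "phi x = (1 / sqrt (2 * pi)) * exp (- (x^2 / 2))"

lemma phi_eq: "phi = std_normal_density"
  by (rule ext) (simp add: phi_def std_normal_density_def)

lemma phi_deriv_aux: "exp (- (x\<^sup>2 / 2)) * x * sqrt (2 * pi) / (2 * pi) = x * exp (- (x\<^sup>2 / 2)) / sqrt (2 * pi)"
proof -
  have s: "sqrt (2 * pi) * sqrt (2 * pi) = 2 * pi" by simp
  have "sqrt (2*pi) > 0" by simp
  then show ?thesis by (subst (2) s[symmetric]) (simp add: field_simps)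
qed

lemma phi_deriv0: "(phi has_real_derivative (- x * phi x)) (at x within s)"
  unfolding phi_def[abs_def] by (auto intro!: derivative_eq_intros simp: phi_deriv_aux)

lemma phi_deriv: "f' = - x * phi x \<Longrightarrow> (phi has_real_derivative f') (at x within s)"
  using phi_deriv0 by simp

lemma t2aux:
  fixes x p q :: real
  assumes q: "0 < q" and hq: "q = x^2 + 1"
  shows "- (((p - x * p * x) * q - p * x * (2 * x)) / (q * q)) = p * (x^2 / q + (x^2 - 1) / q^2)"
proof -
  have num: "- ((p - x * p * x) * q - p * x * (2 * x)) = p * (x^2 * q + x^2 - 1)"
    unfolding hq by (simp add: algebra_simps power2_eq_square)
  have "p * (x^2 / q + (x^2 - 1) / q^2) = p * (x^2 * q + x^2 - 1) / (q * q)"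
    using q by (simp add: field_simps power2_eq_square)
  also have "\<dots> = - ((p - x * p * x) * q - p * x * (2 * x)) / (q * q)" by (simp only: num)
  finally show ?thesis by (simp only: minus_divide_left)
qed

lemma phi_nonneg: "0 \<le> phi x" by (simp add: phi_def)

lemma gauss_real: "(gauss :: real measure) = density lborel (\<lambda>x. ennreal (phi x))"
proof -
  have "(2 * pi) powr (- real DIM(real) / 2) = 1 / sqrt (2 * pi)"
    by (simp add: powr_minus_divide powr_half_sqrt)
  then show ?thesis unfolding gauss_def phi_def by simp
qed

interpretation G1: prob_space "gauss :: real measure"
  unfolding gauss_real phi_eq by (rule prob_space_normal_density) simp

lemma sets_gauss[simp]: "sets (gauss :: 'a::euclidean_space measure) = sets borel"
  by (simp add: gauss_def)

lemma emeasure_gauss_real: "A \<in> sets borel \<Longrightarrow> emeasure (gauss :: real measure) A = (\<integral>\<^sup>+x. ennreal (phi x) * indicator A x \<partial>lborel)"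
  unfolding gauss_real by (subst emeasure_density) (auto simp: phi_def)

lemma space_gauss[simp]: "space (gauss :: 'a::euclidean_space measure) = UNIV"
  by (simp add: gauss_def)

definition tail :: "real \<Rightarrow> real" where
  "tail a = measure (gauss :: real measure) {a..}"

lemma phi_minus: "phi (-x) = phi x" by (simp add: phi_def)

lemma lower_tail: "measure (gauss :: real measure) {..-a} = tail a"
proof -
  have "emeasure (gauss :: real measure) {..-a} = (\<integral>\<^sup>+x. ennreal (phi x) * indicator {..-a} x \<partial>lborel)"
    by (simp add: emeasure_gauss_real)
  also have "\<dots> = ennreal \<bar>-1\<bar> * (\<integral>\<^sup>+x. ennreal (phi (0 + (-1) * x)) * indicator {..-a} (0 + (-1) * x) \<partial>lborel)"
    by (rule nn_integral_real_affine) (auto simp: phi_def)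
  also have "\<dots> = (\<integral>\<^sup>+x. ennreal (phi x) * indicator {a..} x \<partial>lborel)"
    by (auto simp: phi_minus indicator_def intro!: nn_integral_cong)
  also have "\<dots> = emeasure gauss {a..}" by (simp add: emeasure_gauss_real)
  finally show ?thesis unfolding tail_def measure_def by simp
qed

lemma G_eq:
  assumes "0 < a"
  shows "gauss_measure {-a<..<(a::real)} = 1 - 2 * tail a"
proof -
  have "{-a<..<a} = UNIV - ({..-a} \<union> {a..})" by auto
  then have "measure gauss {-a<..<a} = 1 - measure gauss ({..-a} \<union> {a..})"
    using G1.prob_compl[of "{..-a} \<union> {a..}"] by simp
  also have "measure gauss ({..-a} \<union> {a..}) = measure gauss {..-a} + measure gauss {a..}"
    using assms by (intro G1.finite_measure_Union) auto
  finally show ?thesis unfolding gauss_measure_def lower_tail tail_def by simp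
qed

lemma emeasure_tail: "emeasure (gauss :: real measure) {a..} = ennreal (tail a)"
  unfolding tail_def by (simp add: G1.emeasure_eq_measure)

lemma tail_upper:
  assumes a: "0 < a"
  shows "tail a \<le> phi a / a"
proof -
  have "ennreal (tail a) = (\<integral>\<^sup>+x. ennreal (phi x) * indicator {a..} x \<partial>lborel)"
    by (simp add: emeasure_tail[symmetric] emeasure_gauss_real)
  also have "\<dots> \<le> (\<integral>\<^sup>+x. ennreal (x * phi x / a) * indicator {a..} x \<partial>lborel)"
  proof (intro nn_integral_mono)
    fix x
    show "ennreal (phi x) * indicator {a..} x \<le> ennreal (x * phi x / a) * indicator {a..} x"
    proof (cases "a \<le> x")
      case True
      then have "phi x \<le> x * phi x / a" using a phi_nonneg[of x]
        by (simp add: field_simps mult_right_mono)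
      then show ?thesis using True by (auto simp: indicator_def intro!: ennreal_leI)
    qed (simp add: indicator_def)
  qed
  also have "\<dots> = 0 - (- phi a / a)"
    by (rule nn_integral_FTC_atLeast[where F="\<lambda>x. - phi x / a"])
       (insert a, (auto intro!: derivative_eq_intros simp: phi_def field_simps), real_asymp)
  finally show ?thesis using a by (simp add: phi_nonneg)
qed

lemma tail_lower:
  assumes a: "1 \<le> (a::real)"
  shows "phi a * a / (a^2 + 1) \<le> tail a"
proof -
  define h where "h x = phi x * (x^2 / (x^2 + 1) + (x^2 - 1) / (x^2 + 1)^2)" for x :: real
  have "ennreal (0 - (- (phi a * a / (a^2 + 1)))) = (\<integral>\<^sup>+x. ennreal (h x) * indicator {a..} x \<partial>lborel)"
  proof (rule nn_integral_FTC_atLeast[where F="\<lambda>x. - (phi x * x / (x^2 + 1))", symmetric])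
    show "h \<in> borel_measurable borel" unfolding h_def phi_def by measurable
  next
    fix x assume "a \<le> x"
    then have x: "1 \<le> x" using a by simp
    show "0 \<le> h x" unfolding h_def using x
      by (intro mult_nonneg_nonneg phi_nonneg add_nonneg_nonneg divide_nonneg_nonneg) auto
  next
    fix x assume "a \<le> x"
    have p: "0 < x^2 + 1" by (simp add: add_nonneg_pos)
    show "((\<lambda>x. - (phi x * x / (x^2 + 1))) has_real_derivative h x) (at x)"
      unfolding h_def using p
      by (auto intro!: derivative_eq_intros phi_deriv simp: t2aux[OF p refl])
  next
    show "((\<lambda>x. - (phi x * x / (x^2 + 1))) \<longlongrightarrow> 0) at_top"
      unfolding phi_def by real_asymp
  qed
  also have "\<dots> \<le> (\<integral>\<^sup>+x. ennreal (phi x) * indicator {a..} x \<partial>lborel)"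
  proof (intro nn_integral_mono)
    fix x :: real
    have "x^2 / (x^2 + 1) + (x^2 - 1) / (x^2 + 1)^2 \<le> 1"
    proof -
      have p: "0 < x^2 + 1" by (simp add: add_nonneg_pos)
      have "(x^2 - 1) / (x^2 + 1)^2 \<le> (x^2 + 1) / (x^2 + 1)^2"
        by (rule divide_right_mono) simp_all
      also have "(x^2 + 1) / (x^2 + 1)^2 = 1 / (x^2 + 1)"
        using p by (simp add: power2_eq_square)
      finally have "(x^2 - 1) / (x^2 + 1)^2 \<le> 1 / (x^2 + 1)" .
      moreover have "x^2 / (x^2 + 1) + 1 / (x^2 + 1) = 1" using p by (simp add: field_simps)
      ultimately show ?thesis by linarith
    qed
    then have "h x \<le> phi x" unfolding h_def using phi_nonneg[of x] by (simp add: mult_left_le)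
    then show "ennreal (h x) * indicator {a..} x \<le> ennreal (phi x) * indicator {a..} x"
      by (simp add: indicator_def ennreal_leI)
  qed
  also have "\<dots> = ennreal (tail a)"
    by (simp add: emeasure_tail[symmetric] emeasure_gauss_real)
  finally show ?thesis by (simp add: G1.emeasure_eq_measure tail_def)
qed

lemma tail_diff:
  assumes a: "0 \<le> a" and ab: "a \<le> b"
  shows "tail a - tail b \<le> (b - a) * phi a" and "tail b \<le> tail a"
proof -
  have "{a..} = {a..<b} \<union> {b..}" using ab by auto
  moreover have "measure gauss ({a..<b} \<union> {b..}) = measure gauss {a..<b} + measure (gauss :: real measure) {b..}"
    by (rule G1.finite_measure_Union) auto
  ultimately have "tail a = measure gauss {a..<b} + tail b"
    unfolding tail_def by simp
  moreover have "measure gauss {a..<b} \<le> (b - a) * phi a"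
  proof -
    have "emeasure (gauss :: real measure) {a..<b} = (\<integral>\<^sup>+x. ennreal (phi x) * indicator {a..<b} x \<partial>lborel)"
      by (simp add: emeasure_gauss_real)
    also have "\<dots> \<le> (\<integral>\<^sup>+x. ennreal (phi a) * indicator {a..<b} x \<partial>lborel)"
    proof (intro nn_integral_mono)
      fix x
      show "ennreal (phi x) * indicator {a..<b} x \<le> ennreal (phi a) * indicator {a..<b} x"
      proof (cases "x \<in> {a..<b}")
        case True
        then have "a^2 \<le> x^2" using a by (intro power_mono) auto
        then have "phi x \<le> phi a" by (simp add: phi_def divide_right_mono)
        then show ?thesis using True by (simp add: ennreal_leI)
      qed simp
    qed
    also have "\<dots> = ennreal (phi a) * ennreal (b - a)"
      using ab by (subst nn_integral_cmult_indicator) auto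
    also have "\<dots> = ennreal ((b - a) * phi a)"
      using ab by (simp add: ennreal_mult phi_nonneg mult.commute)
    finally have "ennreal (measure gauss {a..<b}) \<le> ennreal ((b - a) * phi a)"
      by (simp add: G1.emeasure_eq_measure)
    then show ?thesis using ab phi_nonneg[of a] by (simp add: ennreal_le_iff)
  qed
  ultimately show "tail a - tail b \<le> (b - a) * phi a" "tail b \<le> tail a" by auto
qed

lemma phi_le1: "phi x \<le> 1"
proof -
  have "1 \<le> sqrt (2 * pi)" using pi_gt3 by simp
  then have "1 / sqrt (2 * pi) \<le> 1" by simp
  moreover have "exp (- (x^2 / 2)) \<le> 1" by simp
  ultimately show ?thesis unfolding phi_def
    by (metis mult_le_one exp_ge_zero zero_le_divide_1_iff real_sqrt_ge_zero mult_nonneg_nonneg zero_le_numeral pi_ge_zero)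
qed

lemma G_cont: "continuous_on {1..b} (\<lambda>a. gauss_measure {-a<..<(a::real)})"
proof -
  have "continuous_on {1..b} (\<lambda>a. 1 - 2 * tail a)"
  proof (rule lipschitz_on_continuous_on)
    show "lipschitz_on 2 {1..b} (\<lambda>a. 1 - 2 * tail a)"
      unfolding lipschitz_on_def
    proof (intro conjI ballI)
      fix x y :: real assume x: "x \<in> {1..b}" and y: "y \<in> {1..b}"
      have *: "\<bar>tail u - tail v\<bar> \<le> \<bar>v - u\<bar>" if "1 \<le> u" "u \<le> v" for u v
        using tail_diff[of u v] that phi_le1[of u] phi_nonneg[of u]
        by (smt (verit, best) mult_left_le)
      have "\<bar>tail x - tail y\<bar> \<le> \<bar>x - y\<bar>"
        using *[of x y] *[of y x] x y by (cases "x \<le> y") (auto simp: abs_minus_commute)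
      then show "dist (1 - 2 * tail x) (1 - 2 * tail y) \<le> 2 * dist x y"
        unfolding dist_real_def abs_le_iff by (simp add: abs_le_iff)
    qed simp
  qed
  then show ?thesis
    by (rule continuous_on_cong[THEN iffD1, rotated 2]) (auto simp: G_eq)
qed


lemma gauss2_emeasure:
  assumes "S \<in> sets borel"
  shows "emeasure (gauss :: (real^2) measure) S =
    ennreal (1 / (2 * pi)) * (\<integral>\<^sup>+x. ennreal (exp (-((norm x)^2)/2)) * indicator S x \<partial>lborel)"
proof -
  have c: "(2 * pi) powr (- real DIM(real^2) / 2) = 1 / (2 * pi)"
    by (simp add: powr_minus_divide)
  have "emeasure (gauss :: (real^2) measure) S =
     (\<integral>\<^sup>+x. ennreal (1 / (2 * pi) * exp (-((norm x)^2)/2)) * indicator S x \<partial>lborel)"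
    unfolding gauss_def c using assms by (subst emeasure_density) auto
  also have "\<dots> = (\<integral>\<^sup>+x. ennreal (1 / (2 * pi)) * (ennreal (exp (-((norm x)^2)/2)) * indicator S x) \<partial>lborel)"
    by (intro nn_integral_cong) (auto simp: indicator_def ennreal_mult'[symmetric])
  also have "\<dots> = ennreal (1 / (2 * pi)) * (\<integral>\<^sup>+x. ennreal (exp (-((norm x)^2)/2)) * indicator S x \<partial>lborel)"
    using assms by (subst nn_integral_cmult) auto
  finally show ?thesis .
qed

lemma gauss2_emeasure_S:
  fixes S :: "(real^2) set" and R :: real
  assumes S: "S \<in> sets lborel" and R: "0 \<le> R"
    and vol: "\<And>s. 0 \<le> s \<Longrightarrow> emeasure lborel (S \<inter> cball 0 s) = ennreal (pi * (min R s)^2)"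
  shows "emeasure (gauss :: (real^2) measure) S = ennreal (1 - exp (-(R^2)/2))"
proof -
  have "emeasure (gauss :: (real^2) measure) S = ennreal (1 / (2 * pi)) * ennreal (2*pi*(1 - exp (-(R^2)/2)))"
    using gauss2_emeasure[of S] ball_int[OF S R vol] S by simp
  also have "\<dots> = ennreal (1 - exp (-(R^2)/2))"
    by (subst ennreal_mult[symmetric]) auto
  finally show ?thesis .
qed

lemma gauss2_measure:
  fixes S :: "(real^2) set" and R :: real
  assumes S: "S \<in> sets lborel" and R: "0 \<le> R"
    and vol: "\<And>s. 0 \<le> s \<Longrightarrow> emeasure lborel (S \<inter> cball 0 s) = ennreal (pi * (min R s)^2)"
  shows "gauss_measure S = 1 - exp (-(R^2)/2)"
  using gauss2_emeasure_S[OF S R vol] unfolding gauss_measure_def measure_def by simp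

lemma uvol2: "unit_ball_vol 2 = pi"
  using unit_ball_vol_even[of 1] by simp

lemma vol_cball2:
  assumes R: "0 \<le> R" and s: "0 \<le> s"
  shows "emeasure lborel (cball (0::real^2) R \<inter> cball 0 s) = ennreal (pi * (min R s)^2)"
proof -
  have "cball (0::real^2) R \<inter> cball 0 s = cball 0 (min R s)" by auto
  then show ?thesis using R s by (simp add: emeasure_cball uvol2)
qed

lemma gauss_cball2:
  assumes R: "0 \<le> R"
  shows "gauss_measure (cball (0::real^2) R) = 1 - exp (-(R^2)/2)"
  by (rule gauss2_measure[OF _ R vol_cball2[OF R]]) simp

lemma finite_gauss2: "finite_measure (gauss :: (real^2) measure)"
proof (rule finite_measureI)
  have "emeasure (gauss :: (real^2) measure) (\<Union>n. cball 0 (real n)) = (SUP n. emeasure gauss (cball (0::real^2) (real n)))"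
    by (rule SUP_emeasure_incseq[symmetric]) (auto simp: incseq_def)
  also have "\<dots> \<le> 1"
  proof (rule SUP_least)
    fix n :: nat
    have "emeasure (gauss :: (real^2) measure) (cball 0 (real n)) = ennreal (1 - exp (-((real n)^2)/2))"
      by (rule gauss2_emeasure_S[OF _ _ vol_cball2]) auto
    then show "emeasure (gauss :: (real^2) measure) (cball 0 (real n)) \<le> 1" by simp
  qed
  finally have le: "emeasure (gauss :: (real^2) measure) (\<Union>n. cball 0 (real n)) \<le> 1" .
  have "(\<Union>n. cball (0::real^2) (real n)) = UNIV"
  proof (intro set_eqI iffI UNIV_I)
    fix x :: "real^2"
    obtain n :: nat where "norm x \<le> real n" using real_arch_simple by blast
    then show "x \<in> (\<Union>n. cball 0 (real n))" by auto
  qed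
  with le show "emeasure (gauss :: (real^2) measure) (space gauss) \<noteq> \<infinity>"
    by (auto simp: top_unique)
qed

lemma gauss_ball2:
  assumes R: "0 \<le> R"
  shows "gauss_measure (ball (0::real^2) R) = 1 - exp (-(R^2)/2)"
proof (rule gauss2_measure[OF _ R])
  fix s :: real assume s: "0 \<le> s"
  show "emeasure lborel (ball (0::real^2) R \<inter> cball 0 s) = ennreal (pi * (min R s)^2)"
  proof (cases "s < R")
    case True
    then have "ball (0::real^2) R \<inter> cball 0 s = cball 0 s" by auto
    then show ?thesis using True s by (simp add: emeasure_cball uvol2)
  next
    case False
    then have "ball (0::real^2) R \<inter> cball 0 s = ball 0 R" by auto
    then show ?thesis using False R by (simp add: emeasure_ball uvol2)
  qed
qed simp

lemma open_nbhd: "open (nbhd A t)"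
  unfolding nbhd_def by (intro open_Collect_less continuous_intros)

lemma nbhd_ball:
  assumes w: "0 \<le> w" and t: "0 < t"
  shows "ball 0 (w + t) \<subseteq> nbhd (cball (0::real^2) w) t"
proof
  fix x :: "real^2" assume "x \<in> ball 0 (w + t)"
  then have x: "norm x < w + t" by simp
  show "x \<in> nbhd (cball 0 w) t"
  proof (cases "norm x \<le> w")
    case True
    then show ?thesis using t by (simp add: nbhd_def)
  next
    case False
    then have nx: "0 < norm x" using w by linarith
    define y where "y = (w / norm x) *\<^sub>R x"
    have ny: "norm y = w" using nx w by (simp add: y_def)
    have "x - y = (1 - w / norm x) *\<^sub>R x" by (simp add: y_def algebra_simps)
    then have "dist x y = (1 - w / norm x) * norm x"
      using False nx by (simp add: dist_norm)
    also have "\<dots> = norm x - w" using nx by (simp add: field_simps)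
    finally have "infdist x (cball 0 w) \<le> norm x - w"
      using ny by (intro infdist_le2[of y]) auto
    then show ?thesis using x by (simp add: nbhd_def)
  qed
qed

lemma nbhd_int:
  assumes a: "0 < a"
  shows "nbhd {-a<..<(a::real)} t \<subseteq> {-(a+t)<..<a+t}"
proof
  fix x :: real assume "x \<in> nbhd {-a<..<a} t"
  then have "infdist x {-a<..<a} < t" by (simp add: nbhd_def)
  moreover have ne: "{-a<..<a} \<noteq> {}" using a by auto
  ultimately have "(INF y\<in>{-a<..<a}. dist x y) < t" by (simp add: infdist_def)
  then obtain y where y: "y \<in> {-a<..<a}" "dist x y < t"
    using a by (subst (asm) cINF_less_iff) auto
  then show "x \<in> {-(a+t)<..<a+t}" by (auto simp: dist_real_def)
qed

lemma F_deriv: "((\<lambda>r. 1 - exp (-(r^2)/2)) has_real_derivative w * exp (-(w^2)/2)) (at w)"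
  by (auto intro!: derivative_eq_intros)

lemma boundary_ball:
  assumes w: "0 < w"
  shows "ereal (w * exp (-(w^2)/2)) \<le> gauss_boundary (cball (0::real^2) w)"
proof -
  define F where "F r = 1 - exp (-(r^2)/2)" for r :: real
  have lim: "((\<lambda>h. (F (w + h) - F w) / h) \<longlongrightarrow> w * exp (-(w^2)/2)) (at 0)"
    using F_deriv[of w] unfolding DERIV_def F_def .
  then have lim': "((\<lambda>h. ereal ((F (w + h) - F w) / h)) \<longlongrightarrow> ereal (w * exp (-(w^2)/2))) (at_right 0)"
    by (simp add: filterlim_at_split)
  have "ereal (w * exp (-(w^2)/2)) = Liminf (at_right 0) (\<lambda>h. ereal ((F (w + h) - F w) / h))"
    by (rule lim_imp_Liminf[OF _ lim', symmetric]) simp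
  also have "\<dots> \<le> gauss_boundary (cball (0::real^2) w)"
    unfolding gauss_boundary_def
  proof (rule Liminf_mono)
    show "\<forall>\<^sub>F t in at_right 0. ereal ((F (w + t) - F w) / t) \<le>
        ereal ((gauss_measure (nbhd (cball (0::real^2) w) t) - gauss_measure (cball (0::real^2) w)) / t)"
      using eventually_at_right_less[of "0::real"]
    proof eventually_elim
      case (elim t)
      have "F (w + t) = gauss_measure (ball (0::real^2) (w + t))"
        using w elim by (simp add: gauss_ball2 F_def)
      also have "\<dots> \<le> gauss_measure (nbhd (cball (0::real^2) w) t)"
        unfolding gauss_measure_def
        using nbhd_ball[of w t] w elim open_nbhd
        by (intro finite_measure.finite_measure_mono[OF finite_gauss2]) (auto intro!: borel_open)
      finally have "F (w + t) \<le> gauss_measure (nbhd (cball (0::real^2) w) t)" .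
      moreover have "gauss_measure (cball (0::real^2) w) = F w"
        using w by (simp add: gauss_cball2 F_def)
      ultimately show ?case using elim by (simp add: divide_right_mono)
    qed
  qed
  finally show ?thesis .
qed

lemma boundary_int:
  assumes a: "0 < a"
  shows "gauss_boundary {-a<..<(a::real)} \<le> ereal (2 * phi a)"
proof -
  have "gauss_boundary {-a<..<(a::real)} \<le>
      Limsup (at_right 0) (\<lambda>t. ereal ((gauss_measure (nbhd {-a<..<(a::real)} t) - gauss_measure {-a<..<a}) / t))"
    unfolding gauss_boundary_def by (rule Liminf_le_Limsup) simp
  also have "\<dots> \<le> ereal (2 * phi a)"
  proof (rule Limsup_bounded)
    show "\<forall>\<^sub>F t in at_right 0. ereal ((gauss_measure (nbhd {-a<..<(a::real)} t) - gauss_measure {-a<..<a}) / t) \<le> ereal (2 * phi a)"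
      using eventually_at_right_less[of "0::real"]
    proof eventually_elim
      case (elim t)
      have "gauss_measure (nbhd {-a<..<(a::real)} t) \<le> gauss_measure {-(a+t)<..<a+t}"
        unfolding gauss_measure_def
        using nbhd_int[OF a, of t] open_nbhd
        by (intro G1.finite_measure_mono) (auto intro!: borel_open)
      also have "\<dots> = 1 - 2 * tail (a + t)" using a elim by (intro G_eq) simp
      finally have "gauss_measure (nbhd {-a<..<(a::real)} t) - gauss_measure {-a<..<a} \<le> 2 * (tail a - tail (a + t))"
        using G_eq[OF a] by simp
      also have "\<dots> \<le> 2 * (t * phi a)"
        using tail_diff(1)[of a "a + t"] a elim by simp
      finally have "(gauss_measure (nbhd {-a<..<(a::real)} t) - gauss_measure {-a<..<a}) / t \<le> 2 * phi a"
        using elim by (simp add: divide_le_eq mult_ac)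
      then show ?case by simp
    qed
  qed
  finally show ?thesis .
qed

lemma sqrt2pi_bounds: "2 \<le> sqrt (2 * pi)" "sqrt (2 * pi) \<le> 3"
proof -
  have "4 \<le> 2 * pi" using pi_gt3 by simp
  then have "sqrt 4 \<le> sqrt (2 * pi)" by (rule real_sqrt_le_mono)
  then show "2 \<le> sqrt (2 * pi)" by simp
  have "2 * pi \<le> 9" using pi_less_4 by simp
  then have "sqrt (2 * pi) \<le> sqrt 9" by (rule real_sqrt_le_mono)
  then show "sqrt (2 * pi) \<le> 3" by simp
qed

theorem lemma3:
  shows "\<exists>w a :: real. w > 0 \<and> a > 0 \<and>
           gauss_measure (cball (0 :: real^2) w) = gauss_measure {-a<..<a} \<and>
           gauss_boundary (cball (0 :: real^2) w) > gauss_boundary {-a<..<a}"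
proof -
  define E where "E = exp (- 50 :: real)"
  have E0: "0 < E" by (simp add: E_def)
  have Fw: "gauss_measure (cball (0 :: real^2) 10) = 1 - E"
    by (simp add: gauss_cball2 E_def)
  have lowG: "gauss_measure {-1<..<(1::real)} \<le> 1 - E"
  proof -
    have "phi 1 * 1 / (1^2 + 1) \<le> tail 1" by (rule tail_lower) simp
    then have t1: "phi 1 / 2 \<le> tail 1" by simp
    have "3 \<le> exp (99/2 :: real)"
      using exp_ge_add_one_self[of "99/2"] by simp
    then have "3 * E \<le> exp (99/2) * E" using E0 by simp
    also have "exp (99/2) * E = exp (- (1^2 / 2))" by (simp add: E_def exp_add[symmetric])
    finally have "E \<le> exp (- (1^2 / 2)) / 3" by simp
    also have "\<dots> \<le> phi 1"
      unfolding phi_def using sqrt2pi_bounds(2)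
      by (simp add: divide_simps)
    finally show ?thesis using t1 G_eq[of 1] by simp
  qed
  have highG: "1 - E \<le> gauss_measure {-(49/5)<..<(49/5::real)}"
  proof -
    have t: "tail (49/5) \<le> phi (49/5) / (49/5)" by (rule tail_upper) simp
    have "exp (99/50 :: real) \<le> exp 2" by simp
    also have "exp (2::real) = exp 1 * exp 1" by (simp add: exp_add[symmetric])
    also have "\<dots> \<le> 3 * 3" using exp_le by (intro mult_mono) auto
    finally have e: "exp (99/50 :: real) \<le> 9" by simp
    have "phi (49/5) = exp (99/50) * E / sqrt (2 * pi)"
      unfolding phi_def E_def by (simp add: exp_add[symmetric] power2_eq_square)
    also have "\<dots> \<le> exp (99/50) * E / 2"
      using sqrt2pi_bounds(1) E0 by (intro divide_left_mono) auto
    also have "\<dots> \<le> 9 * E / 2" using e E0 by simp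
    finally have "2 * tail (49/5) \<le> E" using t E0 by simp
    then show ?thesis using G_eq[of "49/5"] by simp
  qed
  obtain a :: real where a1: "1 \<le> a" and a2: "a \<le> 49/5" and Ga: "gauss_measure {-a<..<a} = 1 - E"
    using IVT'[of "\<lambda>a. gauss_measure {-a<..<(a::real)}" 1 "1 - E" "49/5", OF lowG highG _ G_cont] by auto
  have ta: "tail a = E / 2" using Ga G_eq[of a] a1 by simp
  have "phi a * a / (a^2 + 1) \<le> tail a" by (rule tail_lower[OF a1])
  then have "phi a * a \<le> E / 2 * (a^2 + 1)"
  proof -
    have "0 < a^2 + 1" by (simp add: add_nonneg_pos)
    then have "phi a * a \<le> tail a * (a^2 + 1)"
      using \<open>phi a * a / (a^2 + 1) \<le> tail a\<close> by (simp add: divide_le_eq)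
    then show ?thesis by (simp add: ta)
  qed
  moreover have "a^2 + 1 < 10 * a"
  proof -
    have "0 \<le> (a - 1) * (49/5 - a)" using a1 a2 by simp
    moreover have "(a - 1) * (49/5 - a) = 54/5 * a - a^2 - 49/5"
      by (simp add: field_simps power2_eq_square)
    ultimately show ?thesis using a2 by linarith
  qed
  moreover have "E / 2 * (a^2 + 1) < E / 2 * (10 * a)"
    using E0 \<open>a^2 + 1 < 10 * a\<close> by (intro mult_strict_left_mono) auto
  ultimately have "phi a * a < E / 2 * (10 * a)" by linarith
  then have pa: "2 * phi a < 10 * E" using a1 by (simp add: mult_ac)
  have "gauss_boundary {-a<..<a} \<le> ereal (2 * phi a)" using a1 by (intro boundary_int) simp
  also have "\<dots> < ereal (10 * E)" using pa by simp
  also have "ereal (10 * E) \<le> gauss_boundary (cball (0 :: real^2) 10)"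
    using boundary_ball[of 10] by (simp add: E_def)
  finally show ?thesis using Fw Ga a1 by (intro exI[of _ 10] exI[of _ a]) auto
qed

end
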